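(* Let $n$ be a positive integer, $k$ an integer with $0\le k\le n$, and $0<\phi<\infty$. For integers $0\le \ell\le n$ and real $s$ define $$Q_\ell(s) = \frac{S(n-\ell,k,\phi e^{-s})}{S(n,k,\phi e^{-s})}.$$ Then for all real $s$, $$\frac{dQ_\ell}{ds}(s) = \phi e^{-s}\big[n\,Q_\ell(s)Q_1(s) - (n-\ell)\,Q_{\ell+1}(s)\big].$$
   Context: $S(j,k)$ denotes the (central) Stirling numbers of the second kind. The noncentral Stirling numbers of the second kind are defined, for integers $n\ge 0$, $k\ge 0$ and real $\phi$, by $S(n,k,\phi) = \sum_{r=0}^{n-k}\binom{n}{k+r}\phi^{n-k-r}S(k+r,k)$, with the convention $S(n',k,\phi)=0$ whenever $n'<k$ (including negative $n'$). For $\phi>0$ and $0\le k\le n$, $S(n,k,\phi)>0$. *)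

theory Defs
  imports Complex_Main "HOL-Combinatorics.Stirling"
begin

text \<open>Noncentral Stirling numbers of the second kind S(n,k,phi); the first argument is an
  integer so that S(n',k,phi) = 0 for n' < k (including negative n').\<close>
definition nc_Stirling :: "int \<Rightarrow> nat \<Rightarrow> real \<Rightarrow> real" where
  "nc_Stirling n k \<phi> =
     (if n < int k then 0
      else (\<Sum>r = 0..nat n - k. real (nat n choose (k + r)) * \<phi> ^ (nat n - k - r)
                                  * real (Stirling (k + r) k)))"

end

theory Submission
  imports Defs
begin

definition FF :: "nat \<Rightarrow> nat \<Rightarrow> real \<Rightarrow> real" where
  "FF k m x = (\<Sum>j=0..m. real (m choose j) * x ^ (m - j) * real (Stirling j k))"

lemma nc_eq_FF: "nc_Stirling (int m) k x = FF k m x"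
proof (cases "m < k")
  case True
  then show ?thesis unfolding nc_Stirling_def FF_def
    by (auto intro!: sum.neutral)
next
  case False
  have "FF k m x = (\<Sum>j\<in>{0..<k} \<union> {k..m}. real (m choose j) * x ^ (m - j) * real (Stirling j k))"
    unfolding FF_def using False by (intro sum.cong) auto
  also have "\<dots> = (\<Sum>j\<in>{k..m}. real (m choose j) * x ^ (m - j) * real (Stirling j k))"
    by (subst sum.union_disjoint) (auto intro!: sum.neutral)
  also have "\<dots> = (\<Sum>r=0..m-k. real (m choose (k+r)) * x ^ (m - k - r) * real (Stirling (k+r) k))"
    using False
    by (intro sum.reindex_bij_witness[of _ "\<lambda>r. k + r" "\<lambda>j. j - k"]) auto
  finally show ?thesis using False unfolding nc_Stirling_def by simp
qed

lemma FF_deriv: "(FF k m has_real_derivative real m * FF k (m - 1) x) (at x)"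
proof -
  have "(FF k m has_real_derivative
     (\<Sum>j=0..m. real (m choose j) * (real (m - j) * x ^ (m - j - 1)) * real (Stirling j k))) (at x)"
    unfolding FF_def
    by (auto intro!: derivative_eq_intros sum.cong simp: mult_ac)
  moreover have "(\<Sum>j=0..m. real (m choose j) * (real (m - j) * x ^ (m - j - 1)) * real (Stirling j k))
     = real m * FF k (m - 1) x"
  proof (cases m)
    case 0 then show ?thesis by simp
  next
    case (Suc p)
    have "(\<Sum>j=0..m. real (m choose j) * (real (m - j) * x ^ (m - j - 1)) * real (Stirling j k))
       = (\<Sum>j=0..p. real (m choose j) * (real (m - j) * x ^ (m - j - 1)) * real (Stirling j k))"
      using Suc by simp
    also have "\<dots> = (\<Sum>j=0..p. real m * (real (p choose j) * x ^ (p - j) * real (Stirling j k)))"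
    proof (intro sum.cong refl)
      fix j assume j: "j \<in> {0..p}"
      have "(m - j) * (m choose j) = m * (p choose j)"
        using binomial_absorb_comp[of m j] Suc by simp
      hence "real (m - j) * real (m choose j) = real m * real (p choose j)"
        by (metis of_nat_mult)
      moreover have "m - j - 1 = p - j" using Suc by simp
      ultimately show "real (m choose j) * (real (m - j) * x ^ (m - j - 1)) * real (Stirling j k)
          = real m * (real (p choose j) * x ^ (p - j) * real (Stirling j k))"
        by (simp add: algebra_simps)
    qed
    also have "\<dots> = real m * FF k (m - 1) x"
      unfolding FF_def using Suc by (simp add: sum_distrib_left)
    finally show ?thesis .
  qed
  ultimately show ?thesis by simp
qed

lemma FF_pos: assumes "k \<le> m" "x > 0" shows "FF k m x > 0"
proof -
  have "0 < real (m choose k) * x ^ (m - k) * real (Stirling k k)"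
    using assms by simp
  also have "\<dots> \<le> FF k m x" unfolding FF_def
    using assms by (intro member_le_sum) auto
  finally show ?thesis .
qed

lemma alg: "(F::real) \<noteq> 0 \<Longrightarrow> x*(n*(A/F)*(C/F) - m*(B/F)) = ((m*B*-x)*F - A*(n*C*-x))/(F*F)"
  by (simp add: field_simps)

theorem lemma1:
  fixes n k l :: nat and \<phi> s :: real
    and Q :: "nat \<Rightarrow> real \<Rightarrow> real"
  assumes "n > 0" and "k \<le> n" and "\<phi> > 0" and "l \<le> n"
    and "Q = (\<lambda>j t. nc_Stirling (int n - int j) k (\<phi> * exp (- t))
                      / nc_Stirling (int n) k (\<phi> * exp (- t)))"
  shows "(Q l has_real_derivative
           \<phi> * exp (- s) * (real n * Q l s * Q 1 s - real (n - l) * Q (l + 1) s)) (at s)"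
proof -
  define g where "g = (\<lambda>t. \<phi> * exp (- t))"
  have gpos: "g t > 0" for t using assms(3) unfolding g_def by simp
  have Qj: "Q j t = FF k (n - j) (g t) / FF k n (g t)" if "j \<le> n" for j t
    unfolding assms(5) g_def
    by (subst of_nat_diff[OF that, symmetric]) (simp only: nc_eq_FF)
  have gd: "(g has_real_derivative - g s) (at s)"
    unfolding g_def by (auto intro!: derivative_eq_intros)
  have dF: "((\<lambda>t. FF k m (g t)) has_real_derivative real m * FF k (m - 1) (g s) * - g s) (at s)" for m
    by (rule DERIV_chain2[OF FF_deriv gd])
  have fnz: "FF k n (g s) \<noteq> 0" using FF_pos[OF assms(2) gpos[of s]] by linarith
  have D: "((\<lambda>t. FF k (n - l) (g t) / FF k n (g t)) has_real_derivative
      ((real (n - l) * FF k (n - l - 1) (g s) * - g s) * FF k n (g s)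
       - FF k (n - l) (g s) * (real n * FF k (n - 1) (g s) * - g s)) / (FF k n (g s) * FF k n (g s))) (at s)"
    by (rule DERIV_divide[OF dF dF fnz])
  have Qeq: "Q l = (\<lambda>t. FF k (n - l) (g t) / FF k n (g t))"
    using Qj[OF assms(4)] by auto
  have T: "real (n - l) * Q (l + 1) s = real (n - l) * (FF k (n - l - 1) (g s) / FF k n (g s))"
  proof (cases "l = n")
    case False
    then have "Q (l + 1) s = FF k (n - (l+1)) (g s) / FF k n (g s)" using assms(4) by (intro Qj) simp
    then show ?thesis by simp
  qed simp
  have R: "\<phi> * exp (- s) * (real n * Q l s * Q 1 s - real (n - l) * Q (l + 1) s)
     = ((real (n - l) * FF k (n - l - 1) (g s) * - g s) * FF k n (g s)
       - FF k (n - l) (g s) * (real n * FF k (n - 1) (g s) * - g s)) / (FF k n (g s) * FF k n (g s))"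
  proof -
    have e: "\<phi> * exp (- s) = g s" by (simp add: g_def)
    have q1: "Q 1 s = FF k (n - 1) (g s) / FF k n (g s)" using assms(1) by (intro Qj) simp
    show ?thesis unfolding T e q1 Qj[OF assms(4)] by (rule alg[OF fnz])
  qed
  show ?thesis by (subst R, subst Qeq, rule D)
qed

end
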